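(* Let $G=(V,E)$ be an undirected graph with $n=|V|$ nodes and let $f$ be an integer with $0<f<n$. If there exists an algorithm that solves $\epsilon$-approximate Byzantine consensus on $G$ in the asynchronous local broadcast model tolerating at most $f$ Byzantine faulty nodes, then $n \ge 3f+1$.
   Context: Communication network: an undirected graph $G=(V,E)$ known to every node; each edge is a reliable FIFO link, and a receiver knows the identity of the sender of each message. Local broadcast model: every message sent by a node $u$ is received identically and correctly by all neighbors of $u$ (so a node cannot send different messages to different neighbors). Asynchrony: nodes proceed at arbitrary speeds with no global clock, and every message is delivered after an unbounded but finite delay. At most $f$ nodes are Byzantine faulty and may behave arbitrarily, subject to the local broadcast constraint (in particular a faulty node may crash, i.e. take no steps). $\epsilon$-approximate Byzantine consensus: there are known reals $L<U$ and $\epsilon$ with $U-L>\epsilon>0$; each node starts with a real input in $[L,U]$ and must output a real value such that (1) $\epsilon$-Agreement: the outputs of any two non-faulty nodes differ by at most $\epsilon$; (2) Validity: each non-faulty node's output lies in the convex hull of the inputs of the non-faulty nodes; (3) Termination: every non-faulty node decides its output within finite time (which may depend on $U$, $L$, $\epsilon$). Once a node terminates it takes no further steps. *)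

theory Defs
  imports "HOL-Analysis.Analysis"
begin

text \<open>A deterministic distributed algorithm, parametrised by node identity.
  alg_init v x  : initial local state of node v with input x, and the messages
                  it broadcasts initially;
  alg_step v s u m : node v in state s receives message m from neighbour u and
                  moves to a new state, broadcasting a list of messages;
  alg_out s     : the output of a node in state s (None = not yet decided).
  A node whose output is Some y has decided y and terminated: it takes no
  further steps.\<close>

record ('v, 's, 'm) alg =
  alg_init :: "'v \<Rightarrow> real \<Rightarrow> 's \<times> 'm list"
  alg_step :: "'v \<Rightarrow> 's \<Rightarrow> 'v \<Rightarrow> 'm \<Rightarrow> 's \<times> 'm list"
  alg_out  :: "'s \<Rightarrow> real option"

text \<open>Configuration: local states of the nodes and, for each directed edge
  (u,w), the FIFO queue of messages sent by u not yet delivered to w.\<close>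

type_synonym ('v, 's, 'm) config = "('v \<Rightarrow> 's) \<times> ('v \<times> 'v \<Rightarrow> 'm list)"

datatype ('v, 'm) event = Deliver 'v 'v | Byz 'v 'm | Idle

text \<open>Local broadcast: node u appends the messages ms to the queues of all
  its outgoing edges (all neighbours receive identically).\<close>

definition bcast :: "('v \<times> 'v) set \<Rightarrow> 'v \<Rightarrow> 'm list \<Rightarrow> ('v \<times> 'v \<Rightarrow> 'm list) \<Rightarrow> ('v \<times> 'v \<Rightarrow> 'm list)" where
  "bcast E u ms Q = (\<lambda>e. if fst e = u \<and> e \<in> E then Q e @ ms else Q e)"

definition enabled :: "('v, 's, 'm) alg \<Rightarrow> ('v \<times> 'v) set \<Rightarrow> 'v set \<Rightarrow> ('v, 's, 'm) config \<Rightarrow> 'v \<Rightarrow> 'v \<Rightarrow> bool" where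
  "enabled A E F c u w \<longleftrightarrow>
     w \<notin> F \<and> (u, w) \<in> E \<and> alg_out A (fst c w) = None \<and> snd c (u, w) \<noteq> []"

definition trans :: "('v, 's, 'm) alg \<Rightarrow> ('v \<times> 'v) set \<Rightarrow> 'v set \<Rightarrow>
    ('v, 's, 'm) config \<Rightarrow> ('v, 'm) event \<Rightarrow> ('v, 's, 'm) config \<Rightarrow> bool" where
  "trans A E F c ev c' \<longleftrightarrow>
     (case ev of
        Deliver u w \<Rightarrow> enabled A E F c u w \<and>
          (let S = fst c; Q = snd c; m = hd (Q (u, w));
               r = alg_step A w (S w) u m
           in c' = (S(w := fst r), bcast E w (snd r) (Q((u, w) := tl (Q (u, w))))))
      | Byz b m \<Rightarrow> b \<in> F \<and> c' = (fst c, bcast E b [m] (snd c))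
      | Idle \<Rightarrow> c' = c)"

definition initial :: "('v, 's, 'm) alg \<Rightarrow> ('v \<times> 'v) set \<Rightarrow> 'v set \<Rightarrow> ('v \<Rightarrow> real) \<Rightarrow> ('v, 's, 'm) config \<Rightarrow> bool" where
  "initial A E F x c \<longleftrightarrow>
     (\<forall>v. v \<notin> F \<longrightarrow> fst c v = fst (alg_init A v (x v))) \<and>
     snd c = (\<lambda>(u, w). if (u, w) \<in> E \<and> u \<notin> F then snd (alg_init A u (x u)) else [])"

definition fair_exec :: "('v, 's, 'm) alg \<Rightarrow> ('v \<times> 'v) set \<Rightarrow> 'v set \<Rightarrow> ('v \<Rightarrow> real) \<Rightarrow>
    (nat \<Rightarrow> ('v, 's, 'm) config) \<Rightarrow> (nat \<Rightarrow> ('v, 'm) event) \<Rightarrow> bool" where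
  "fair_exec A E F x c ev \<longleftrightarrow>
     initial A E F x (c 0) \<and>
     (\<forall>t. trans A E F (c t) (ev t) (c (Suc t))) \<and>
     (\<forall>t u w. enabled A E F (c t) u w \<longrightarrow>
        (\<exists>t'\<ge>t. ev t' = Deliver u w \<or> \<not> enabled A E F (c t') u w))"

definition solves_approx_consensus ::
    "('v, 's, 'm) alg \<Rightarrow> 'v set \<Rightarrow> ('v \<times> 'v) set \<Rightarrow> nat \<Rightarrow> real \<Rightarrow> real \<Rightarrow> real \<Rightarrow> bool" where
  "solves_approx_consensus A V E f L U \<epsilon> \<longleftrightarrow>
     (\<forall>F x c ev.
        F \<subseteq> V \<and> card F \<le> f \<and> (\<forall>v\<in>V. L \<le> x v \<and> x v \<le> U) \<and> fair_exec A E F x c ev \<longrightarrow>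
          (\<forall>v\<in>V - F. \<forall>w\<in>V - F. \<forall>t t' a b.
              alg_out A (fst (c t) v) = Some a \<and> alg_out A (fst (c t') w) = Some b \<longrightarrow>
              \<bar>a - b\<bar> \<le> \<epsilon>) \<and>
          (\<forall>v\<in>V - F. \<forall>t a. alg_out A (fst (c t) v) = Some a \<longrightarrow>
              a \<in> convex hull (x ` (V - F))) \<and>
          (\<forall>v\<in>V - F. \<exists>t. alg_out A (fst (c t) v) \<noteq> None))"

end

theory Submission
  imports Defs
begin

definition step_of :: "('v, 's, 'm) alg \<Rightarrow> ('v \<times> 'v) set \<Rightarrow> ('v, 's, 'm) config \<Rightarrow> ('v, 'm) event \<Rightarrow> ('v, 's, 'm) config" where
  "step_of A E c ev = (case ev of
        Deliver u w \<Rightarrow>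
          (let S = fst c; Q = snd c; m = hd (Q (u, w));
               r = alg_step A w (S w) u m
           in (S(w := fst r), bcast E w (snd r) (Q((u, w) := tl (Q (u, w))))))
      | Byz b m \<Rightarrow> (fst c, bcast E b [m] (snd c))
      | Idle \<Rightarrow> c)"

definition valid :: "('v, 's, 'm) alg \<Rightarrow> ('v \<times> 'v) set \<Rightarrow> 'v set \<Rightarrow> ('v, 's, 'm) config \<Rightarrow> ('v, 'm) event \<Rightarrow> bool" where
  "valid A E F c ev = (case ev of Deliver u w \<Rightarrow> enabled A E F c u w | Byz b m \<Rightarrow> b \<in> F | Idle \<Rightarrow> True)"

lemma trans_iff: "Defs.trans A E F c ev c' \<longleftrightarrow> valid A E F c ev \<and> c' = step_of A E c ev"
  by (cases ev) (auto simp: Defs.trans_def step_of_def valid_def Let_def)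

inductive steps :: "('v, 's, 'm) alg \<Rightarrow> ('v \<times> 'v) set \<Rightarrow> 'v set \<Rightarrow> ('v, 's, 'm) config \<Rightarrow> ('v, 'm) event list \<Rightarrow> ('v, 's, 'm) config \<Rightarrow> bool"
  for A E F where
  Nil: "steps A E F c [] c"
| Cons: "Defs.trans A E F c e c' \<Longrightarrow> steps A E F c' es c'' \<Longrightarrow> steps A E F c (e # es) c''"

lemma steps_append: "steps A E F c es c' \<Longrightarrow> steps A E F c' es' c'' \<Longrightarrow> steps A E F c (es @ es') c''"
  by (induction rule: steps.induct) (auto intro: steps.intros)

lemma steps_snoc: "steps A E F c es c' \<Longrightarrow> Defs.trans A E F c' e c'' \<Longrightarrow> steps A E F c (es @ [e]) c''"
  by (rule steps_append) (auto intro: steps.intros)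

lemma byz_steps: "b \<in> F \<Longrightarrow> steps A E F c (map (Byz b) ms) (fst c, bcast E b ms (snd c))"
proof (induction ms arbitrary: c)
  case Nil
  have "(fst c, bcast E b [] (snd c)) = c" by (cases c) (simp add: bcast_def fun_eq_iff)
  then show ?case by (metis list.simps(8) steps.Nil)
next
  case (Cons m ms)
  have t: "Defs.trans A E F c (Byz b m) (fst c, bcast E b [m] (snd c))"
    using Cons.prems by (simp add: Defs.trans_def)
  have "steps A E F (fst c, bcast E b [m] (snd c)) (map (Byz b) ms) (fst c, bcast E b ms (bcast E b [m] (snd c)))"
    using Cons by (metis fst_conv snd_conv)
  moreover have "bcast E b ms (bcast E b [m] (snd c)) = bcast E b (m # ms) (snd c)"
    by (auto simp: bcast_def)
  ultimately show ?case using t by (auto intro: steps.Cons)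
qed

definition sched :: "('v \<times> 'v) list \<Rightarrow> ('v, 's, 'm) alg \<Rightarrow> ('v \<times> 'v) set \<Rightarrow> 'v set \<Rightarrow> ('v, 's, 'm) config \<Rightarrow> nat \<Rightarrow> ('v, 'm) event" where
  "sched el A E F c t = (if el = [] then Idle else
     (if enabled A E F c (fst (el ! (t mod length el))) (snd (el ! (t mod length el)))
      then Deliver (fst (el ! (t mod length el))) (snd (el ! (t mod length el))) else Idle))"

lemma sched_not_byz: "sched el A E F c t \<noteq> Byz b m"
  by (simp add: sched_def)

lemma sched_valid: "valid A E F c (sched el A E F c t)"
  by (simp add: sched_def valid_def)

primrec run :: "('v \<times> 'v) list \<Rightarrow> ('v, 's, 'm) alg \<Rightarrow> ('v \<times> 'v) set \<Rightarrow> 'v set \<Rightarrow> ('v, 's, 'm) config \<Rightarrow> ('v, 'm) event list \<Rightarrow> nat \<Rightarrow> ('v, 's, 'm) config" where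
  "run el A E F c0 es 0 = c0"
| "run el A E F c0 es (Suc t) = step_of A E (run el A E F c0 es t)
      (if t < length es then es ! t else sched el A E F (run el A E F c0 es t) t)"

definition evt :: "('v \<times> 'v) list \<Rightarrow> ('v, 's, 'm) alg \<Rightarrow> ('v \<times> 'v) set \<Rightarrow> 'v set \<Rightarrow> ('v, 's, 'm) config \<Rightarrow> ('v, 'm) event list \<Rightarrow> nat \<Rightarrow> ('v, 'm) event" where
  "evt el A E F c0 es t = (if t < length es then es ! t else sched el A E F (run el A E F c0 es t) t)"

lemma run_prefix:
  assumes "steps A E F c0 es c1"
  shows "t \<le> length es \<Longrightarrow> steps A E F (run el A E F c0 es t) (drop t es) c1"
proof (induction t)
  case 0
  then show ?case using assms by simp
next
  case (Suc t)
  then have st: "steps A E F (run el A E F c0 es t) (es ! t # drop (Suc t) es) c1"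
    by (simp add: Cons_nth_drop_Suc)
  then obtain c' where tr: "Defs.trans A E F (run el A E F c0 es t) (es ! t) c'"
    and st2: "steps A E F c' (drop (Suc t) es) c1"
    by (cases rule: steps.cases) auto
  from tr have "c' = run el A E F c0 es (Suc t)" using Suc.prems by (simp add: trans_iff)
  then show ?case using st2 by simp
qed

lemma run_valid_prefix:
  assumes "steps A E F c0 es c1" "t < length es"
  shows "valid A E F (run el A E F c0 es t) (es ! t)"
proof -
  have "steps A E F (run el A E F c0 es t) (es ! t # drop (Suc t) es) c1"
    using run_prefix[OF assms(1), of t el] assms(2) by (simp add: Cons_nth_drop_Suc)
  then obtain c' where tr: "Defs.trans A E F (run el A E F c0 es t) (es ! t) c'"
    by (cases rule: steps.cases) auto
  then show ?thesis by (simp add: trans_iff)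
qed

lemma run_end:
  assumes "steps A E F c0 es c1"
  shows "run el A E F c0 es (length es) = c1"
  using run_prefix[OF assms, of "length es" el] by (auto elim: steps.cases)

lemma mod_hit:
  fixes K i m :: nat
  assumes "0 < K" "i < K"
  shows "(m + (i + K - m mod K) mod K) mod K = i"
proof -
  have "(m + (i + K - m mod K) mod K) mod K = (m mod K + (i + K - m mod K)) mod K"
    by (metis mod_add_left_eq mod_add_right_eq)
  also have "m mod K + (i + K - m mod K) = i + K"
  proof -
    have "m mod K < K" using assms by simp
    then show ?thesis by linarith
  qed
  finally show ?thesis using assms by simp
qed

lemma ext_fair:
  assumes "set el = E" "initial A E F x c0" "steps A E F c0 es c1"
  shows "fair_exec A E F x (run el A E F c0 es) (evt el A E F c0 es)"
proof -
  let ?c = "run el A E F c0 es" and ?ev = "evt el A E F c0 es"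
  have tr: "Defs.trans A E F (?c t) (?ev t) (?c (Suc t))" for t
  proof (cases "t < length es")
    case True
    then show ?thesis using run_valid_prefix[OF assms(3) True] by (simp add: trans_iff evt_def)
  next
    case False
    then show ?thesis using sched_valid by (simp add: trans_iff evt_def)
  qed
  have fair: "\<exists>t'\<ge>t. ?ev t' = Deliver u w \<or> \<not> enabled A E F (?c t') u w"
    if en: "enabled A E F (?c t) u w" for t u w
  proof -
    have "(u, w) \<in> set el" using en assms(1) by (simp add: enabled_def)
    then obtain i where i: "i < length el" "el ! i = (u, w)" by (metis in_set_conv_nth)
    define K where "K = length el"
    have K: "0 < K" using i K_def by (cases el) auto
    define m where "m = max t (length es)"
    define t' where "t' = m + (i + K - m mod K) mod K"
    have tm: "t' mod K = i" unfolding t'_def using mod_hit[OF K, of i m] i K_def by simp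
    have "t' \<ge> t" "\<not> t' < length es" unfolding t'_def m_def by auto
    then have "?ev t' = sched el A E F (?c t') t'" by (simp add: evt_def)
    then have "?ev t' = Deliver u w \<or> \<not> enabled A E F (?c t') u w"
      using tm i K by (auto simp: sched_def K_def)
    then show ?thesis using \<open>t' \<ge> t\<close> by blast
  qed
  show ?thesis unfolding fair_exec_def using assms(2) tr fair by simp
qed

lemma fair_trans:
  assumes "fair_exec A E F x c ev"
  shows "Defs.trans A E F (c t) (ev t) (c (Suc t))"
proof -
  have "\<forall>t. Defs.trans A E F (c t) (ev t) (c (Suc t))" using assms unfolding fair_exec_def by (elim conjE)
  then show ?thesis by (rule spec)
qed
lemma fair_init:
  assumes "fair_exec A E F x c ev"
  shows "initial A E F x (c 0)"
  using assms unfolding fair_exec_def by (elim conjE)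

lemma out_persist:
  assumes "Defs.trans A E F c e c'" "alg_out A (fst c v) = Some d"
  shows "alg_out A (fst c' v) = Some d"
  using assms by (cases e) (auto simp: Defs.trans_def enabled_def Let_def)

lemma out_persist_exec:
  assumes "fair_exec A E F x c ev" "alg_out A (fst (c t) v) = Some d" "t \<le> t'"
  shows "alg_out A (fst (c t') v) = Some d"
  using assms(3)
proof (induction t' rule: dec_induct)
  case base
  then show ?case using assms(2) .
next
  case (step n)
  have "Defs.trans A E F (c n) (ev n) (c (Suc n))" by (rule fair_trans[OF assms(1)])
  then show ?case by (rule out_persist[OF _ step.IH])
qed

lemma bcast_cong: "Q e = Q' e \<Longrightarrow> bcast E b ms Q e = bcast E b ms Q' e"
  by (simp add: bcast_def)

definition Rel :: "'v set \<Rightarrow> 'v set \<Rightarrow> 'v set \<Rightarrow> ('v, 's, 'm) config \<Rightarrow> ('v, 's, 'm) config \<Rightarrow> bool" where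
  "Rel Q M Ob cC cB \<longleftrightarrow> (\<forall>v\<in>Ob. fst cB v = fst cC v) \<and>
     (\<forall>u w. u \<in> Ob \<union> M \<longrightarrow> w \<in> Ob \<longrightarrow> snd cB (u, w) = snd cC (u, w)) \<and>
     (\<forall>q w. q \<in> Q \<longrightarrow> snd cC (q, w) = [])"

lemma sim_step:
  assumes E: "E \<subseteq> V \<times> V" and cover: "V \<subseteq> Ob \<union> Q \<union> M" and disj: "Ob \<inter> M = {}"
    and rel: "Rel Q M Ob cC cB" and tr: "Defs.trans A E Q cC e cC'" and nb: "\<forall>b m. e \<noteq> Byz b m"
  shows "\<exists>es cB'. steps A E M cB es cB' \<and> Rel Q M Ob cC' cB'"
proof (cases e)
  case Idle
  then have "cC' = cC" using tr by (simp add: Defs.trans_def)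
  then have "steps A E M cB [] cB \<and> Rel Q M Ob cC' cB" using rel by (simp add: steps.Nil)
  then show ?thesis by blast
next
  case (Byz b m)
  then show ?thesis using nb by auto
next
  case (Deliver u w)
  obtain S Qu where cC: "cC = (S, Qu)" by fastforce
  obtain SB QB where cB: "cB = (SB, QB)" by fastforce
  have en: "enabled A E Q cC u w" and cC': "cC' = step_of A E cC e"
    using tr Deliver by (auto simp: trans_iff valid_def)
  have wQ: "w \<notin> Q" and uwE: "(u, w) \<in> E" and outN: "alg_out A (S w) = None" and ne: "Qu (u, w) \<noteq> []"
    using en cC by (auto simp: enabled_def)
  have uV: "u \<in> V" "w \<in> V" using uwE E by auto
  have uQ: "u \<notin> Q" using rel ne cC by (auto simp: Rel_def)
  have uOM: "u \<in> Ob \<union> M" using uV uQ cover by auto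
  define r where "r = alg_step A w (S w) u (hd (Qu (u, w)))"
  have cC'eq: "cC' = (S(w := fst r), bcast E w (snd r) (Qu((u, w) := tl (Qu (u, w)))))"
    using cC' Deliver cC by (simp add: step_of_def r_def Let_def)
  have wOM: "w \<in> Ob \<union> M" using uV wQ cover by auto
  show ?thesis
  proof (cases "w \<in> M")
    case True
    have st: "steps A E M cB (map (Byz w) (snd r)) (SB, bcast E w (snd r) QB)"
      using byz_steps[OF True, of A E cB "snd r"] cB by simp
    have r1: "\<forall>v\<in>Ob. SB v = S v" and r2: "\<forall>u w. u \<in> Ob \<union> M \<longrightarrow> w \<in> Ob \<longrightarrow> QB (u, w) = Qu (u, w)"
      and r3: "\<forall>q w. q \<in> Q \<longrightarrow> Qu (q, w) = []" using rel cC cB by (auto simp: Rel_def)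
    have a1: "\<forall>v\<in>Ob. SB v = (S(w := fst r)) v" using r1 True disj by auto
    have a2: "\<forall>u' w'. u' \<in> Ob \<union> M \<longrightarrow> w' \<in> Ob \<longrightarrow>
        bcast E w (snd r) QB (u', w') = bcast E w (snd r) (Qu((u, w) := tl (Qu (u, w)))) (u', w')"
    proof (intro allI impI)
      fix u' w' assume h: "u' \<in> Ob \<union> M" "w' \<in> Ob"
      then have ne: "(u', w') \<noteq> (u, w)" using True disj by auto
      have "QB (u', w') = Qu (u', w')" using r2 h by blast
      moreover have "(Qu((u, w) := tl (Qu (u, w)))) (u', w') = Qu (u', w')" by (rule fun_upd_other[OF ne])
      ultimately have "QB (u', w') = (Qu((u, w) := tl (Qu (u, w)))) (u', w')" by simp
      then show "bcast E w (snd r) QB (u', w') = bcast E w (snd r) (Qu((u, w) := tl (Qu (u, w)))) (u', w')"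
        by (rule bcast_cong)
    qed
    have a3: "\<forall>q w'. q \<in> Q \<longrightarrow> bcast E w (snd r) (Qu((u, w) := tl (Qu (u, w)))) (q, w') = []"
    proof (intro allI impI)
      fix q w' assume h: "q \<in> Q"
      then have "q \<noteq> w" "q \<noteq> u" using wQ uQ by auto
      then show "bcast E w (snd r) (Qu((u, w) := tl (Qu (u, w)))) (q, w') = []"
        using r3 h unfolding bcast_def by simp
    qed
    have "Rel Q M Ob cC' (SB, bcast E w (snd r) QB)"
      unfolding cC'eq Rel_def using a1 a2 a3 by simp
    then show ?thesis using st by (intro exI conjI)
  next
    case False
    then have wO: "w \<in> Ob" using wOM by auto
    have same_st: "SB w = S w" and same_q: "QB (u, w) = Qu (u, w)"
      using rel wO uOM cC cB by (auto simp: Rel_def)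
    have enB: "enabled A E M cB u w"
      using False uwE outN ne same_st same_q cB by (simp add: enabled_def)
    have cB'eq: "step_of A E cB (Deliver u w) = (SB(w := fst r), bcast E w (snd r) (QB((u, w) := tl (QB (u, w)))))"
      using cB same_st same_q by (simp add: step_of_def r_def Let_def)
    have trB: "Defs.trans A E M cB (Deliver u w) (step_of A E cB (Deliver u w))"
      using enB by (simp add: trans_iff valid_def)
    have st: "steps A E M cB [Deliver u w] (step_of A E cB (Deliver u w))"
      using trB by (auto intro: steps.intros)
    have r1: "\<forall>v\<in>Ob. SB v = S v" and r2: "\<forall>u w. u \<in> Ob \<union> M \<longrightarrow> w \<in> Ob \<longrightarrow> QB (u, w) = Qu (u, w)"
      and r3: "\<forall>q w. q \<in> Q \<longrightarrow> Qu (q, w) = []" using rel cC cB by (auto simp: Rel_def)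
    have a1: "\<forall>v\<in>Ob. (SB(w := fst r)) v = (S(w := fst r)) v" using r1 by simp
    have a2: "\<forall>u' w'. u' \<in> Ob \<union> M \<longrightarrow> w' \<in> Ob \<longrightarrow>
        bcast E w (snd r) (QB((u, w) := tl (QB (u, w)))) (u', w') = bcast E w (snd r) (Qu((u, w) := tl (Qu (u, w)))) (u', w')"
    proof (intro allI impI)
      fix u' w' assume h: "u' \<in> Ob \<union> M" "w' \<in> Ob"
      have q: "QB (u', w') = Qu (u', w')" using r2 h by blast
      have "(QB((u, w) := tl (QB (u, w)))) (u', w') = (Qu((u, w) := tl (Qu (u, w)))) (u', w')"
        using q same_q by (cases "(u', w') = (u, w)") auto
      then show "bcast E w (snd r) (QB((u, w) := tl (QB (u, w)))) (u', w') = bcast E w (snd r) (Qu((u, w) := tl (Qu (u, w)))) (u', w')"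
        by (rule bcast_cong)
    qed
    have a3: "\<forall>q w'. q \<in> Q \<longrightarrow> bcast E w (snd r) (Qu((u, w) := tl (Qu (u, w)))) (q, w') = []"
    proof (intro allI impI)
      fix q w' assume h: "q \<in> Q"
      then have "q \<noteq> w" "q \<noteq> u" using wQ uQ by auto
      then show "bcast E w (snd r) (Qu((u, w) := tl (Qu (u, w)))) (q, w') = []"
        using r3 h unfolding bcast_def by simp
    qed
    have "Rel Q M Ob cC' (step_of A E cB (Deliver u w))"
      unfolding cB'eq cC'eq Rel_def using a1 a2 a3 by simp
    then show ?thesis using st by (intro exI conjI)
  qed
qed

lemma emit_steps:
  assumes "distinct ml" "set ml \<subseteq> M"
  shows "steps A E M c (concat (map (\<lambda>m. map (Byz m) (g m)) ml))
           (fst c, \<lambda>e. if fst e \<in> set ml \<and> e \<in> E then snd c e @ g (fst e) else snd c e)"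
  using assms
proof (induction ml arbitrary: c)
  case Nil
  have "(fst c, \<lambda>e. snd c e) = c" by simp
  then show ?case by (simp add: steps.Nil)
next
  case (Cons m ml)
  have s1: "steps A E M c (map (Byz m) (g m)) (fst c, bcast E m (g m) (snd c))"
    using Cons.prems by (intro byz_steps) auto
  have s2: "steps A E M (fst c, bcast E m (g m) (snd c)) (concat (map (\<lambda>m. map (Byz m) (g m)) ml))
     (fst c, \<lambda>e. if fst e \<in> set ml \<and> e \<in> E then bcast E m (g m) (snd c) e @ g (fst e) else bcast E m (g m) (snd c) e)"
    using Cons.IH[of "(fst c, bcast E m (g m) (snd c))"] Cons.prems unfolding fst_conv snd_conv by simp
  have eq: "(\<lambda>e. if fst e \<in> set ml \<and> e \<in> E then bcast E m (g m) (snd c) e @ g (fst e) else bcast E m (g m) (snd c) e)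
      = (\<lambda>e. if fst e \<in> set (m # ml) \<and> e \<in> E then snd c e @ g (fst e) else snd c e)"
    using Cons.prems by (auto simp: bcast_def fun_eq_iff)
  show ?case using steps_append[OF s1 s2] eq by simp
qed

lemma init_rel:
  assumes iC: "initial A E Q x0 cC0"
    and cB0: "cB0 = (\<lambda>v. fst (alg_init A v (xb v)), \<lambda>(u, w). if (u, w) \<in> E \<and> u \<notin> M then snd (alg_init A u (xb u)) else [])"
    and xe: "\<forall>v\<in>Ob. xb v = x0 v" and d1: "Ob \<inter> Q = {}" and d2: "M \<inter> Q = {}"
    and ml: "distinct ml" "set ml = M"
  shows "\<exists>es cB1. steps A E M cB0 es cB1 \<and> Rel Q M Ob cC0 cB1"
proof -
  let ?g = "\<lambda>m. snd (alg_init A m (x0 m))"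
  have st: "steps A E M cB0 (concat (map (\<lambda>m. map (Byz m) (?g m)) ml))
           (fst cB0, \<lambda>e. if fst e \<in> set ml \<and> e \<in> E then snd cB0 e @ ?g (fst e) else snd cB0 e)"
    using ml by (intro emit_steps) auto
  have "Rel Q M Ob cC0 (fst cB0, \<lambda>e. if fst e \<in> set ml \<and> e \<in> E then snd cB0 e @ ?g (fst e) else snd cB0 e)"
    using iC xe d1 d2 ml unfolding Rel_def initial_def cB0 by auto
  then show ?thesis using st by blast
qed

lemma sim_run:
  assumes E: "E \<subseteq> V \<times> V" and cover: "V \<subseteq> Ob \<union> Q \<union> M" and disj: "Ob \<inter> M = {}"
    and fe: "fair_exec A E Q x0 cC evC" and nb: "\<forall>t b m. evC t \<noteq> Byz b m"
    and r0: "Rel Q M Ob (cC 0) cB1" and s0: "steps A E M cB0 es0 cB1"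
  shows "\<exists>es cB. steps A E M cB0 es cB \<and> Rel Q M Ob (cC t) cB"
proof (induction t)
  case 0
  then show ?case using r0 s0 by blast
next
  case (Suc t)
  then obtain es cB where st: "steps A E M cB0 es cB" and rl: "Rel Q M Ob (cC t) cB" by blast
  have tr: "Defs.trans A E Q (cC t) (evC t) (cC (Suc t))" by (rule fair_trans[OF fe])
  obtain es' cB' where "steps A E M cB es' cB'" "Rel Q M Ob (cC (Suc t)) cB'"
    using sim_step[OF E cover disj rl tr] nb by blast
  then show ?case using steps_append[OF st] by blast
qed

lemma world_B:
  assumes E: "E \<subseteq> V \<times> V" and el: "set el = E" and cover: "V \<subseteq> Ob \<union> Q \<union> M"
    and disj: "Ob \<inter> M = {}" and d1: "Ob \<inter> Q = {}" and d2: "M \<inter> Q = {}"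
    and fe: "fair_exec A E Q x0 cC evC" and nb: "\<forall>t b m. evC t \<noteq> Byz b m"
    and xe: "\<forall>v\<in>Ob. xb v = x0 v" and fM: "finite M"
    and sol: "solves_approx_consensus A V E f L U \<epsilon>"
    and MV: "M \<subseteq> V" and cM: "card M \<le> f" and xr: "\<forall>v\<in>V. L \<le> xb v \<and> xb v \<le> U"
    and v: "v \<in> Ob" "v \<in> V" and out: "alg_out A (fst (cC T) v) = Some d"
  shows "d \<in> convex hull (xb ` (V - M))"
proof -
  define cB0 where "cB0 = (((\<lambda>v. fst (alg_init A v (xb v))), (\<lambda>(u, w). if (u, w) \<in> E \<and> u \<notin> M then snd (alg_init A u (xb u)) else []))
     :: ('a, 'b, 'c) config)"
  obtain ml where ml: "distinct ml" "set ml = M" using finite_distinct_list[OF fM] by blast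
  have iC: "initial A E Q x0 (cC 0)" by (rule fair_init[OF fe])
  obtain es0 cB1 where s0: "steps A E M cB0 es0 cB1" and r0: "Rel Q M Ob (cC 0) cB1"
    using init_rel[OF iC cB0_def xe d1 d2 ml] by blast
  obtain es cB where st: "steps A E M cB0 es cB" and rl: "Rel Q M Ob (cC T) cB"
    using sim_run[OF E cover disj fe nb r0 s0] by blast
  have iB: "initial A E M xb cB0" unfolding initial_def cB0_def by auto
  have feB: "fair_exec A E M xb (run el A E M cB0 es) (evt el A E M cB0 es)"
    using ext_fair[OF el iB st] .
  have endB: "run el A E M cB0 es (length es) = cB" using run_end[OF st] .
  have "alg_out A (fst (run el A E M cB0 es (length es)) v) = Some d"
    using endB rl v out by (simp add: Rel_def)
  moreover have "v \<in> V - M" using v disj by auto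
  moreover have "\<forall>v\<in>V - M. \<forall>t a. alg_out A (fst (run el A E M cB0 es t) v) = Some a \<longrightarrow>
              a \<in> convex hull (xb ` (V - M))"
    using sol[unfolded solves_approx_consensus_def, rule_format, OF conjI[OF MV conjI[OF cM conjI[OF xr feB]]]]
    by (elim conjE)
  ultimately show ?thesis by blast
qed

lemma partition3:
  assumes fin: "finite V" and "0 < f" "f < card V" and n3: "card V \<le> 3 * f"
  shows "\<exists>P R. P \<subseteq> V \<and> R \<subseteq> V \<and> P \<inter> R = {} \<and> P \<noteq> {} \<and> R \<noteq> {} \<and> card P \<le> f \<and> card R \<le> f \<and> card (V - P - R) \<le> f"
proof -
  define n where "n = card V"
  define a where "a = min f (n - 1)"
  have "a \<le> card V" unfolding a_def n_def by simp
  then obtain P where PV: "P \<subseteq> V" and cP: "card P = a"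
    using obtain_subset_with_card_n by metis
  define b where "b = min f (n - a)"
  have cVP: "card (V - P) = n - a" using PV cP fin n_def by (simp add: card_Diff_subset finite_subset)
  then have "b \<le> card (V - P)" unfolding b_def by simp
  then obtain R where RVP: "R \<subseteq> V - P" and cR: "card R = b"
    using obtain_subset_with_card_n by metis
  have finR: "finite R" using RVP fin finite_subset by blast
  have "card (V - P - R) = card (V - P) - card R"
    using RVP finR by (simp add: card_Diff_subset)
  then have cQ: "card (V - P - R) = n - a - b" using cVP cR by simp
  have ab: "1 \<le> a" "1 \<le> b" "a \<le> f" "b \<le> f" "n - a - b \<le> f"
    using assms(2,3) n3 unfolding a_def b_def n_def by auto
  have "P \<noteq> {}" using cP ab by auto
  moreover have "R \<noteq> {}" using cR ab by auto
  moreover have "R \<subseteq> V" "P \<inter> R = {}" using RVP by auto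
  ultimately show ?thesis using PV cP cR ab cQ by (intro exI[of _ P] exI[of _ R]) auto
qed

theorem theorem1:
  fixes V :: "'v set" and E :: "('v \<times> 'v) set" and f :: nat
    and L U \<epsilon> :: real and A :: "('v, 's, 'm) alg"
  assumes "finite V"
    and "E \<subseteq> V \<times> V" and "sym E" and "\<forall>v. (v, v) \<notin> E"
    and "0 < f" and "f < card V"
    and "L < U" and "0 < \<epsilon>" and "\<epsilon> < U - L"
    and "solves_approx_consensus A V E f L U \<epsilon>"
  shows "card V \<ge> 3 * f + 1"
proof (rule ccontr)
  assume "\<not> card V \<ge> 3 * f + 1"
  then have n3: "card V \<le> 3 * f" by simp
  note fin = assms(1) and EV = assms(2) and sol = assms(10)
  obtain P R where PV: "P \<subseteq> V" and RV: "R \<subseteq> V" and PR: "P \<inter> R = {}" and Pne: "P \<noteq> {}"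
    and Rne: "R \<noteq> {}" and cPf: "card P \<le> f" and cRf: "card R \<le> f" and cQ0: "card (V - P - R) \<le> f"
    using partition3[OF fin assms(5,6) n3] by blast
  define Q where "Q = V - P - R"
  have cQf: "card Q \<le> f" using cQ0 Q_def by simp
  have finP: "finite P" and finR: "finite R" using PV RV fin finite_subset by blast+
  obtain p where p: "p \<in> P" using Pne by blast
  obtain r where r: "r \<in> R" using Rne by blast
  have QV: "Q \<subseteq> V" and PQ: "P \<inter> Q = {}" and RQ: "R \<inter> Q = {}" unfolding Q_def by auto
  have cover1: "V \<subseteq> P \<union> Q \<union> R" and cover2: "V \<subseteq> R \<union> Q \<union> P" unfolding Q_def by auto
  have "finite E" using EV fin finite_subset by blast
  then obtain el where el: "set el = E" using finite_list by blast
  define x0 where "x0 = (\<lambda>v::'v. if v \<in> P then L else U)"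
  define x1 where "x1 = (\<lambda>v::'v. if v \<in> R then U else L)"
  define cC0 where "cC0 = (((\<lambda>v. fst (alg_init A v (x0 v))), (\<lambda>(u, w). if (u, w) \<in> E \<and> u \<notin> Q then snd (alg_init A u (x0 u)) else []))
     :: ('v, 's, 'm) config)"
  have iC: "initial A E Q x0 cC0" unfolding initial_def cC0_def by auto
  let ?cC = "run el A E Q cC0 []" and ?evC = "evt el A E Q cC0 []"
  have feC: "fair_exec A E Q x0 ?cC ?evC" using ext_fair[OF el iC steps.Nil] .
  have nb: "\<forall>t b m. ?evC t \<noteq> Byz b m" by (simp add: evt_def sched_not_byz)
  have xr0: "\<forall>v\<in>V. L \<le> x0 v \<and> x0 v \<le> U" and xr1: "\<forall>v\<in>V. L \<le> x1 v \<and> x1 v \<le> U"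
    using assms(7) unfolding x0_def x1_def by auto
  have pVQ: "p \<in> V - Q" using p PV PQ by blast
  have rVQ: "r \<in> V - Q" using r RV RQ by blast
  note solC = sol[unfolded solves_approx_consensus_def, rule_format, OF conjI[OF QV conjI[OF cQf conjI[OF xr0 feC]]]]
  have termC: "\<forall>v\<in>V - Q. \<exists>t. alg_out A (fst (?cC t) v) \<noteq> None" using solC by (elim conjE)
  have agrC: "\<forall>v\<in>V - Q. \<forall>w\<in>V - Q. \<forall>t t' a b.
              alg_out A (fst (?cC t) v) = Some a \<and> alg_out A (fst (?cC t') w) = Some b \<longrightarrow>
              \<bar>a - b\<bar> \<le> \<epsilon>" using solC by (elim conjE)
  obtain tp dp where tp: "alg_out A (fst (?cC tp) p) = Some dp" using termC pVQ by blast
  obtain tr dr where tr: "alg_out A (fst (?cC tr) r) = Some dr" using termC rVQ by blast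
  define T where "T = max tp tr"
  have oP: "alg_out A (fst (?cC T) p) = Some dp"
    using out_persist_exec[OF feC tp] T_def by simp
  have oR: "alg_out A (fst (?cC T) r) = Some dr"
    using out_persist_exec[OF feC tr] T_def by simp
  have agr: "\<bar>dp - dr\<bar> \<le> \<epsilon>" using agrC pVQ rVQ oP oR by blast
  have xe1: "\<forall>v\<in>P. x1 v = x0 v" using PR unfolding x0_def x1_def by auto
  have pV: "p \<in> V" and rV: "r \<in> V" using p r PV RV by auto
  have "dp \<in> convex hull (x1 ` (V - R))"
    using world_B[OF EV el cover1 PR PQ RQ feC nb xe1 finR sol RV cRf xr1 p pV oP] .
  moreover have "x1 ` (V - R) = {L}"
  proof -
    have "p \<in> V - R" using p PV PR by blast
    moreover have "x1 ` (V - R) = (\<lambda>_. L) ` (V - R)" unfolding x1_def by (intro image_cong) auto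
    ultimately show ?thesis using image_constant by metis
  qed
  ultimately have dpL: "dp = L" by simp
  have RP: "R \<inter> P = {}" using PR by auto
  have xe2: "\<forall>v\<in>R. x0 v = x0 v" by simp
  have "dr \<in> convex hull (x0 ` (V - P))"
    using world_B[OF EV el cover2 RP RQ PQ feC nb xe2 finP sol PV cPf xr0 r rV oR] .
  moreover have "x0 ` (V - P) = {U}"
  proof -
    have "r \<in> V - P" using r RV PR by blast
    moreover have "x0 ` (V - P) = (\<lambda>_. U) ` (V - P)" unfolding x0_def by (intro image_cong) auto
    ultimately show ?thesis using image_constant by metis
  qed
  ultimately have drU: "dr = U" by simp
  show False using agr dpL drU assms(9) by simp
qed

end
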